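(* Let $A$ be a real $2\times 2$ matrix and $B$ a real $1\times 2$ matrix, and let $\mathrm{NT}=\{\vec{x}\in\mathbb{R}^2 : BA^k\vec{x}>0 \text{ for all integers } k\ge 0\}$. Suppose $A$ has two eigenvalues $\lambda_1>\lambda_2>0$ with eigenvectors $\vec{\beta}_1,\vec{\beta}_2$ respectively, such that $B\vec{\beta}_1>0$ and $B\vec{\beta}_2>0$. If $\vec{\alpha}\in\mathbb{R}^2$ satisfies $B\vec{\alpha}=0$ and $BA\vec{\alpha}>0$, then $\mathrm{NT}=\{k_1\vec{\alpha}+k_2\vec{\beta}_2 : k_1\ge 0,\ k_2>0\}$.
   Context: $\mathrm{NT}$ is the non-termination set of the loop "while $(B\vec{x}>0)$ $\{\vec{x}:=A\vec{x}\}$". *)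

theory Defs
  imports "HOL-Analysis.Analysis"
begin

text \<open>Non-termination set of the loop  while (B x > 0) { x := A x }  for a real 2x2 matrix A
  and a real 1x2 matrix B:  NT = { x . B A^k x > 0 (A^k x written as k-fold iteration of x |-> A x) for all k >= 0 }.\<close>
definition NT :: "real^2^2 \<Rightarrow> real^2^1 \<Rightarrow> (real^2) set" where
  "NT A B = {x. \<forall>k::nat. (B *v (((\<lambda>y. A *v y) ^^ k) x)) $ 1 > 0}"

end

theory Submission
  imports Defs
begin

lemma iter_lin:
  fixes A :: "real^2^2"
  assumes "A *v b1 = l1 *\<^sub>R b1" "A *v b2 = l2 *\<^sub>R b2"
  shows "((\<lambda>y. A *v y) ^^ k) (c1 *\<^sub>R b1 + c2 *\<^sub>R b2) = (c1 * l1^k) *\<^sub>R b1 + (c2 * l2^k) *\<^sub>R b2"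
proof (induction k)
  case 0 then show ?case by simp
next
  case (Suc k)
  show ?case using Suc assms
    by (simp add: matrix_vector_right_distrib matrix_vector_mult_scaleR algebra_simps)
qed

lemma span2:
  fixes b1 b2 :: "real^2"
  assumes "b1 \<noteq> 0" "b2 \<noteq> 0" "A *v b1 = l1 *\<^sub>R b1" "A *v b2 = l2 *\<^sub>R b2" "l1 \<noteq> l2"
  shows "\<exists>c1 c2. x = c1 *\<^sub>R b1 + c2 *\<^sub>R b2"
proof -
  define d where "d = b1$1 * b2$2 - b1$2 * b2$1"
  have "d \<noteq> 0"
  proof
    assume d0: "d = 0"
    obtain t where t: "b2 = t *\<^sub>R b1"
    proof (cases "b1$1 = 0")
      case True
      then have "b1$2 \<noteq> 0" using assms(1) by (auto simp: vec_eq_iff forall_2)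
      then show ?thesis using d0 True
        by (intro that[of "b2$2 / b1$2"]) (auto simp: vec_eq_iff forall_2 d_def field_simps)
    next
      case False
      then show ?thesis using d0
        by (intro that[of "b2$1 / b1$1"]) (auto simp: vec_eq_iff forall_2 d_def field_simps)
    qed
    have "A *v b2 = l1 *\<^sub>R b2" using t assms(3) by (simp add: matrix_vector_mult_scaleR)
    then have "l1 *\<^sub>R b2 - l2 *\<^sub>R b2 = 0" using assms(4) by (metis diff_self)
    then have "(l1 - l2) *\<^sub>R b2 = 0" by (simp only: scaleR_diff_left)
    moreover have "l1 - l2 \<noteq> 0" using assms(5) by simp
    ultimately show False using assms(2) by simp
  qed
  define c1 where "c1 = (x$1 * b2$2 - x$2 * b2$1)/d"
  define c2 where "c2 = (b1$1 * x$2 - b1$2 * x$1)/d"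
  have h1: "c1 * d = x$1 * b2$2 - x$2 * b2$1" using \<open>d \<noteq> 0\<close> by (simp add: c1_def)
  have h2: "c2 * d = b1$1 * x$2 - b1$2 * x$1" using \<open>d \<noteq> 0\<close> by (simp add: c2_def)
  have "(c1 * b1$1 + c2 * b2$1) * d = (c1 * d) * b1$1 + (c2 * d) * b2$1" by (simp add: algebra_simps)
  also have "\<dots> = (x$1 * b2$2 - x$2 * b2$1) * b1$1 + (b1$1 * x$2 - b1$2 * x$1) * b2$1" by (simp only: h1 h2)
  also have "\<dots> = x$1 * d" by (simp add: d_def algebra_simps)
  finally have "(c1 * b1$1 + c2 * b2$1) * d = x$1 * d" .
  then have e1: "c1 * b1$1 + c2 * b2$1 = x$1" using \<open>d \<noteq> 0\<close> by simp
  have "(c1 * b1$2 + c2 * b2$2) * d = (c1 * d) * b1$2 + (c2 * d) * b2$2" by (simp add: algebra_simps)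
  also have "\<dots> = (x$1 * b2$2 - x$2 * b2$1) * b1$2 + (b1$1 * x$2 - b1$2 * x$1) * b2$2" by (simp only: h1 h2)
  also have "\<dots> = x$2 * d" by (simp add: d_def algebra_simps)
  finally have "(c1 * b1$2 + c2 * b2$2) * d = x$2 * d" .
  then have e2: "c1 * b1$2 + c2 * b2$2 = x$2" using \<open>d \<noteq> 0\<close> by simp
  show ?thesis using e1 e2 by (intro exI[of _ c1] exI[of _ c2]) (auto simp: vec_eq_iff forall_2)
qed

theorem lemma7:
  fixes A :: "real^2^2" and B :: "real^2^1"
    and l1 l2 :: real and beta1 beta2 alpha :: "real^2"
  assumes "l1 > l2" and "l2 > 0"
    and "beta1 \<noteq> 0" and "A *v beta1 = l1 *\<^sub>R beta1"
    and "beta2 \<noteq> 0" and "A *v beta2 = l2 *\<^sub>R beta2"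
    and "(B *v beta1) $ 1 > 0" and "(B *v beta2) $ 1 > 0"
    and "(B *v alpha) $ 1 = 0" and "(B *v (A *v alpha)) $ 1 > 0"
  shows "NT A B = {k1 *\<^sub>R alpha + k2 *\<^sub>R beta2 | k1 k2. k1 \<ge> 0 \<and> k2 > 0}"
proof -
  define p where "p = (B *v beta1) $ 1"
  define q where "q = (B *v beta2) $ 1"
  have p: "p > 0" and q: "q > 0" using assms(7,8) by (auto simp: p_def q_def)
  have F: "(B *v (((\<lambda>y. A *v y) ^^ k) (c1 *\<^sub>R beta1 + c2 *\<^sub>R beta2))) $ 1
      = c1 * l1^k * p + c2 * l2^k * q" for k c1 c2
    using iter_lin[OF assms(4,6)]
    by (simp add: matrix_vector_right_distrib matrix_vector_mult_scaleR p_def q_def)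
  have sp: "\<exists>c1 c2. x = c1 *\<^sub>R beta1 + c2 *\<^sub>R beta2" for x
    using span2[OF assms(3,5,4,6)] assms(1) by auto
  obtain a b where ab: "alpha = a *\<^sub>R beta1 + b *\<^sub>R beta2" using sp by blast
  have e0: "a * p + b * q = 0" using F[of 0 a b] assms(9) ab by simp
  have e1: "a * l1 * p + b * l2 * q > 0" using F[of 1 a b] assms(10) ab by simp
  have "a * p * (l1 - l2) > 0"
  proof -
    have "b * q = - a * p" using e0 by linarith
    then have "b * l2 * q = - a * p * l2" by (metis mult.commute mult.left_commute)
    then show ?thesis using e1 by (simp add: algebra_simps)
  qed
  then have a: "a > 0" using p assms(1) by (simp add: zero_less_mult_iff)
  have NTc: "x \<in> NT A B \<longleftrightarrow> c1 \<ge> 0 \<and> c1 * p + c2 * q > 0"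
    if x: "x = c1 *\<^sub>R beta1 + c2 *\<^sub>R beta2" for x c1 c2
  proof
    assume "x \<in> NT A B"
    then have all: "\<forall>k. c1 * l1^k * p + c2 * l2^k * q > 0"
      unfolding NT_def x using F by simp
    have "c1 \<ge> 0"
    proof (rule ccontr)
      assume c: "\<not> c1 \<ge> 0"
      have r: "1 < l1 / l2" using assms(1,2) by simp
      obtain n where n: "c2 * q / (- c1 * p) < (l1/l2)^n" using real_arch_pow[OF r] by blast
      have pos: "- c1 * p > 0" using c p by (simp add: mult_neg_pos)
      have "c2 * q < (l1/l2)^n * (- c1 * p)" using n pos by (simp only: pos_divide_less_eq)
      then have "c2 * q * l2^n < (l1/l2)^n * (- c1 * p) * l2^n"
        using assms(2) by (intro mult_strict_right_mono) auto
      also have "\<dots> = - c1 * l1^n * p" using assms(2) by (simp add: power_divide field_simps)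
      finally show False using all[rule_format, of n] by (simp add: algebra_simps)
    qed
    then show "c1 \<ge> 0 \<and> c1 * p + c2 * q > 0" using all[rule_format, of 0] by simp
  next
    assume h: "c1 \<ge> 0 \<and> c1 * p + c2 * q > 0"
    have "c1 * l1^k * p + c2 * l2^k * q > 0" for k
    proof -
      have "l2^k \<le> l1^k" using assms(1,2) by (simp add: power_mono)
      then have "c1 * l2^k * p \<le> c1 * l1^k * p" using h p
        by (simp add: mult_left_mono mult_right_mono)
      moreover have "l2^k * (c1 * p + c2 * q) > 0" using h assms(2) by simp
      ultimately show ?thesis by (simp add: algebra_simps)
    qed
    then show "x \<in> NT A B" unfolding NT_def x using F by simp
  qed
  show ?thesis
  proof (intro set_eqI iffI)
    fix x assume xn: "x \<in> NT A B"
    obtain c1 c2 where x: "x = c1 *\<^sub>R beta1 + c2 *\<^sub>R beta2" using sp by blast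
    from NTc[OF x] xn have h: "c1 \<ge> 0" "c1 * p + c2 * q > 0" by auto
    define k1 where "k1 = c1 / a"
    define k2 where "k2 = (c1 * p + c2 * q) / q"
    have "x = k1 *\<^sub>R alpha + k2 *\<^sub>R beta2"
    proof -
      have "k1 * b + k2 = c2"
      proof -
        have "b * q = - a * p" using e0 by linarith
        then have "b = - a * p / q" using q by (auto simp: field_simps)
        have z: "a * (c1 * p) + b * (c1 * q) = 0"
        proof -
          have "a * (c1 * p) + b * (c1 * q) = c1 * (a * p + b * q)" by (simp add: algebra_simps)
          then show ?thesis using e0 by simp
        qed
        show ?thesis using a q z by (simp add: k1_def k2_def field_simps)
      qed
      moreover have "k1 * a = c1" using a by (simp add: k1_def)
      ultimately show ?thesis unfolding x ab
        by (simp add: algebra_simps scaleR_add_left[symmetric] del: scaleR_add_left)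
    qed
    moreover have "k1 \<ge> 0" "k2 > 0" using h a q by (auto simp: k1_def k2_def)
    ultimately show "x \<in> {k1 *\<^sub>R alpha + k2 *\<^sub>R beta2 | k1 k2. k1 \<ge> 0 \<and> k2 > 0}" by blast
  next
    fix x assume "x \<in> {k1 *\<^sub>R alpha + k2 *\<^sub>R beta2 | k1 k2. k1 \<ge> 0 \<and> k2 > 0}"
    then obtain k1 k2 where k: "k1 \<ge> 0" "k2 > 0" and x: "x = k1 *\<^sub>R alpha + k2 *\<^sub>R beta2" by blast
    have x': "x = (k1 * a) *\<^sub>R beta1 + (k1 * b + k2) *\<^sub>R beta2"
      unfolding x ab by (simp add: algebra_simps)
    have "k1 * a * p + (k1 * b + k2) * q = k1 * (a * p + b * q) + k2 * q" by (simp add: algebra_simps)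
    then have "k1 * a * p + (k1 * b + k2) * q > 0" using e0 k q by simp
    then show "x \<in> NT A B" using NTc[OF x'] k a by simp
  qed
qed

end
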